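(* Let $a_1,\dots,a_n\in\mathbb{R}^d$, $f_1,\dots,f_n:\mathbb{R}\to[0,\infty)$ twice differentiable, $\gamma:\mathbb{R}^d\to[0,\infty)$, $F(x)=\frac1n\sum_{i=1}^n f_i(a_i^Tx)+\gamma(x)$, $\lambda>0$, $y\in\mathbb{R}^d$, $r>0$, and $F_{\lambda,y}(x)=F(x)+\lambda\|x-y\|_2^2$. Let $\tilde f_i$ and $\tilde F_{\lambda,y}$ be the quadratic approximations defined in the context. Let $B(r,y)=\{x:\|x-y\|_2\le r\}$ and suppose that there are constants $C_1,\dots,C_n\ge 0$ such that for all $x\in B(r,y)$: (i) $f_i(a_i^Tx)-\tilde f_i(x)\le \frac{C_i}{6}\|x-y\|_2^3$ for every $i$; (ii) $F_{\lambda,y}(x)\ge \tilde F_{\lambda,y}(x)$; (iii) $\tilde F_{\lambda,y}(x)>0$. Let $\alpha=\min_{x\in B(r,y)}F_{\lambda,y}(x)$ and assume $\alpha>0$. Then for every $i\in[n]$, $$\sup_{x\in B(r,y)}\frac{\frac1n f_i(a_i^Tx)}{F_{\lambda,y}(x)}\;\le\;\sup_{x\in B(r,y)}\frac{\frac1n \tilde f_i(x)}{\tilde F_{\lambda,y}(x)}+\min\Big(\frac{C_i r}{6n\lambda},\ \frac{C_i r^3}{6n\alpha}\Big).$$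
   Context: Quadratic approximation around $y$: $\tilde f_i(x)=f_i(a_i^Ty)+a_i^T(x-y)f_i'(a_i^Ty)+\tfrac12(a_i^T(x-y))^2f_i''(a_i^Ty)$ and $\tilde F_{\lambda,y}(x)=\frac1n\sum_{i=1}^n\tilde f_i(x)+\gamma(x)+\lambda\|x-y\|_2^2$. The two suprema are the local sensitivities of $a_i$ with respect to $F_{\lambda,y}$ and $\tilde F_{\lambda,y}$ on $B(r,y)$. *)

theory Defs
  imports "HOL-Analysis.Analysis"
begin

definition objF :: "nat \<Rightarrow> (nat \<Rightarrow> real^'d) \<Rightarrow> (nat \<Rightarrow> real \<Rightarrow> real) \<Rightarrow> (real^'d \<Rightarrow> real) \<Rightarrow> real^'d \<Rightarrow> real" where
  "objF n a f \<gamma> x = (1 / real n) * (\<Sum>i=1..n. f i (a i \<bullet> x)) + \<gamma> x"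

definition Flam :: "nat \<Rightarrow> (nat \<Rightarrow> real^'d) \<Rightarrow> (nat \<Rightarrow> real \<Rightarrow> real) \<Rightarrow> (real^'d \<Rightarrow> real) \<Rightarrow> real \<Rightarrow> real^'d \<Rightarrow> real^'d \<Rightarrow> real" where
  "Flam n a f \<gamma> lam y x = objF n a f \<gamma> x + lam * (norm (x - y))\<^sup>2"

text \<open>Quadratic approximation of f_i(a_i^T x) around y; f1, f2 are the first and second derivatives.\<close>
definition ftilde :: "(nat \<Rightarrow> real^'d) \<Rightarrow> (nat \<Rightarrow> real \<Rightarrow> real) \<Rightarrow> (nat \<Rightarrow> real \<Rightarrow> real) \<Rightarrow> (nat \<Rightarrow> real \<Rightarrow> real) \<Rightarrow> real^'d \<Rightarrow> nat \<Rightarrow> real^'d \<Rightarrow> real" where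
  "ftilde a f f1 f2 y i x =
     f i (a i \<bullet> y) + (a i \<bullet> (x - y)) * f1 i (a i \<bullet> y) + (1/2) * (a i \<bullet> (x - y))\<^sup>2 * f2 i (a i \<bullet> y)"

definition Ftilde :: "nat \<Rightarrow> (nat \<Rightarrow> real^'d) \<Rightarrow> (nat \<Rightarrow> real \<Rightarrow> real) \<Rightarrow> (nat \<Rightarrow> real \<Rightarrow> real) \<Rightarrow> (nat \<Rightarrow> real \<Rightarrow> real) \<Rightarrow> (real^'d \<Rightarrow> real) \<Rightarrow> real \<Rightarrow> real^'d \<Rightarrow> real^'d \<Rightarrow> real" where
  "Ftilde n a f f1 f2 \<gamma> lam y x =
     (1 / real n) * (\<Sum>i=1..n. ftilde a f f1 f2 y i x) + \<gamma> x + lam * (norm (x - y))\<^sup>2"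

end

theory Submission
  imports Defs
begin

theorem theorem3:
  fixes n :: nat and a :: "nat \<Rightarrow> real^'d" and f f1 f2 :: "nat \<Rightarrow> real \<Rightarrow> real"
    and \<gamma> :: "real^'d \<Rightarrow> real" and lam r \<alpha> :: real and y :: "real^'d" and C :: "nat \<Rightarrow> real"
  assumes f_nonneg: "\<And>i t. i \<in> {1..n} \<Longrightarrow> f i t \<ge> 0"
    and f_deriv1: "\<And>i t. i \<in> {1..n} \<Longrightarrow> (f i has_real_derivative f1 i t) (at t)"
    and f_deriv2: "\<And>i t. i \<in> {1..n} \<Longrightarrow> (f1 i has_real_derivative f2 i t) (at t)"
    and \<gamma>_nonneg: "\<And>x. \<gamma> x \<ge> 0"
    and lam_pos: "lam > 0" and r_pos: "r > 0"
    and C_nonneg: "\<And>i. i \<in> {1..n} \<Longrightarrow> C i \<ge> 0"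
    and hyp_i: "\<And>i x. i \<in> {1..n} \<Longrightarrow> x \<in> cball y r \<Longrightarrow>
                   f i (a i \<bullet> x) - ftilde a f f1 f2 y i x \<le> C i / 6 * (norm (x - y)) ^ 3"
    and hyp_ii: "\<And>x. x \<in> cball y r \<Longrightarrow> Flam n a f \<gamma> lam y x \<ge> Ftilde n a f f1 f2 \<gamma> lam y x"
    and hyp_iii: "\<And>x. x \<in> cball y r \<Longrightarrow> Ftilde n a f f1 f2 \<gamma> lam y x > 0"
    and \<alpha>_min: "\<exists>x0\<in>cball y r. Flam n a f \<gamma> lam y x0 = \<alpha>"
    and \<alpha>_lower: "\<And>x. x \<in> cball y r \<Longrightarrow> \<alpha> \<le> Flam n a f \<gamma> lam y x"
    and \<alpha>_pos: "\<alpha> > 0"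
    and i: "i \<in> {1..n}"
  shows "(SUP x\<in>cball y r. ereal ((1 / real n) * f i (a i \<bullet> x) / Flam n a f \<gamma> lam y x))
         \<le> (SUP x\<in>cball y r. ereal ((1 / real n) * ftilde a f f1 f2 y i x / Ftilde n a f f1 f2 \<gamma> lam y x))
            + ereal (min (C i * r / (6 * real n * lam)) (C i * r ^ 3 / (6 * real n * \<alpha>)))"
proof -
  define S where "S = (SUP x\<in>cball y r. ereal ((1 / real n) * ftilde a f f1 f2 y i x / Ftilde n a f f1 f2 \<gamma> lam y x))"
  define m where "m = min (C i * r / (6 * real n * lam)) (C i * r ^ 3 / (6 * real n * \<alpha>))"
  have n_pos: "real n > 0" using i by auto
  have Ci: "C i \<ge> 0" using C_nonneg i .
  have yin: "y \<in> cball y r" using r_pos by simp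
  have ty: "ftilde a f f1 f2 y i y = f i (a i \<bullet> y)" by (simp add: ftilde_def)
  have S0: "ereal 0 \<le> S"
  proof -
    have "0 \<le> (1 / real n) * ftilde a f f1 f2 y i y / Ftilde n a f f1 f2 \<gamma> lam y y"
      using ty f_nonneg[OF i] hyp_iii[OF yin] n_pos by simp
    moreover have "ereal ((1 / real n) * ftilde a f f1 f2 y i y / Ftilde n a f f1 f2 \<gamma> lam y y) \<le> S"
      unfolding S_def by (rule SUP_upper[OF yin])
    ultimately show ?thesis by (meson ereal_less_eq(3) order_trans)
  qed
  have pt: "ereal ((1 / real n) * f i (a i \<bullet> x) / Flam n a f \<gamma> lam y x) \<le> S + ereal m"
    if x: "x \<in> cball y r" for x
  proof -
    define P where "P = (1 / real n) * f i (a i \<bullet> x)"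
    define Pt where "Pt = (1 / real n) * ftilde a f f1 f2 y i x"
    define Fl where "Fl = Flam n a f \<gamma> lam y x"
    define Ft where "Ft = Ftilde n a f f1 f2 \<gamma> lam y x"
    define t where "t = norm (x - y)"
    define E where "E = C i * t ^ 3 / (6 * real n)"
    have t0: "t \<ge> 0" and tr: "t \<le> r" using x by (auto simp: t_def dist_norm norm_minus_commute)
    have Ft0: "Ft > 0" using hyp_iii[OF x] by (simp add: Ft_def)
    have FlFt: "Ft \<le> Fl" using hyp_ii[OF x] by (simp add: Ft_def Fl_def)
    have Fl0: "Fl > 0" using Ft0 FlFt by simp
    have Fla: "\<alpha> \<le> Fl" using \<alpha>_lower[OF x] by (simp add: Fl_def)
    have objF0: "objF n a f \<gamma> x \<ge> 0"
      unfolding objF_def using f_nonneg \<gamma>_nonneg n_pos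
      by (intro add_nonneg_nonneg mult_nonneg_nonneg sum_nonneg) auto
    have Fllam: "lam * t^2 \<le> Fl" using objF0 by (simp add: Fl_def Flam_def t_def)
    have PE: "P \<le> Pt + E"
    proof -
      have "f i (a i \<bullet> x) \<le> ftilde a f f1 f2 y i x + C i / 6 * t ^ 3"
        using hyp_i[OF i x] by (simp add: t_def)
      hence "(1/real n) * f i (a i \<bullet> x) \<le> (1/real n) * (ftilde a f f1 f2 y i x + C i / 6 * t ^ 3)"
        using n_pos by (intro mult_left_mono) auto
      also have "\<dots> = Pt + E" by (simp add: Pt_def E_def algebra_simps)
      finally show ?thesis by (simp add: P_def)
    qed
    have E0: "E \<ge> 0" using Ci t0 n_pos by (simp add: E_def)
    have step1: "P / Fl \<le> Pt / Fl + E / Fl"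
      using PE Fl0 by (simp add: divide_right_mono add_divide_distrib[symmetric])
    have step2: "Pt / Fl \<le> max 0 (Pt / Ft)"
    proof (cases "Pt \<ge> 0")
      case True
      hence "Pt / Fl \<le> Pt / Ft" using Ft0 FlFt by (intro divide_left_mono) auto
      thus ?thesis by simp
    next
      case False
      hence "Pt / Fl \<le> 0" using Fl0 by (simp add: divide_nonpos_pos)
      thus ?thesis by simp
    qed
    have step3a: "E / Fl \<le> C i * r ^ 3 / (6 * real n * \<alpha>)"
    proof -
      have "E / Fl \<le> E / \<alpha>" using E0 Fla \<alpha>_pos by (intro divide_left_mono) auto
      also have "E \<le> C i * r ^ 3 / (6 * real n)"
        unfolding E_def using Ci t0 tr n_pos
        by (intro divide_right_mono mult_left_mono power_mono) auto
      hence "E / \<alpha> \<le> C i * r ^ 3 / (6 * real n) / \<alpha>" using \<alpha>_pos by (intro divide_right_mono) auto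
      finally show ?thesis by (simp add: field_simps)
    qed
    have step3b: "E / Fl \<le> C i * r / (6 * real n * lam)"
    proof (cases "t = 0")
      case True
      thus ?thesis using Ci r_pos lam_pos n_pos by (simp add: E_def)
    next
      case False
      hence tp: "t > 0" using t0 by simp
      have "E / Fl \<le> E / (lam * t^2)" using E0 Fllam lam_pos tp Fl0 by (intro divide_left_mono) auto
      also have "E / (lam * t^2) = C i * t / (6 * real n * lam)"
        using tp lam_pos n_pos by (simp add: E_def field_simps power2_eq_square power3_eq_cube)
      also have "\<dots> \<le> C i * r / (6 * real n * lam)"
        using Ci tr lam_pos n_pos by (intro divide_right_mono mult_left_mono) auto
      finally show ?thesis .
    qed
    have real: "P / Fl \<le> max 0 (Pt / Ft) + m"
      using step1 step2 step3a step3b by (simp add: m_def)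
    have Smax: "ereal (max 0 (Pt / Ft)) \<le> S"
    proof -
      have "ereal (Pt / Ft) \<le> S" unfolding S_def Pt_def Ft_def by (rule SUP_upper[OF x])
      thus ?thesis using S0 by (simp add: max_def)
    qed
    have "ereal (P / Fl) \<le> ereal (max 0 (Pt / Ft)) + ereal m" using real by (simp only: plus_ereal.simps ereal_less_eq)
    also have "\<dots> \<le> S + ereal m" using Smax by (rule add_right_mono)
    finally show ?thesis by (simp add: P_def Fl_def)
  qed
  show ?thesis unfolding S_def[symmetric] m_def[symmetric]
    by (rule SUP_least) (rule pt)
qed

end
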